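(* Let $K$ be a precubical set, $\alpha\in K_0$ and $\epsilon\in\,]0,1[$. Let $\mathcal{G}^-_\alpha(K)$ be the quotient of the homotopy branching space $\mathcal{P}^-_\alpha(K,\epsilon)$ by the equivalence relation $\gamma_1\simeq^-\gamma_2$ if there exists $0<\epsilon'<\epsilon$ such that $\gamma_1\!\restriction_{[0,\epsilon']}=\gamma_2\!\restriction_{[0,\epsilon']}$. Then the map $\mathcal{G}^-_{0_2}(\partial\square[2])\to \mathcal{G}^-_{0_2}(\square[2])$ is not a closed inclusion, and therefore not an r-cofibration for $r\in\{q,m,h\}$.
   Context: ${\mathbf{Top}}$ denotes the category of $\Delta$-generated spaces (or of $\Delta$-Hausdorff $\Delta$-generated spaces), with internal hom $\mathbf{TOP}(-,-)$, equipped with its q-model structure (Quillen), m-model structure (mixed) or h-model structure (Hurewicz/Strøm); r-cofibration means cofibration of the r-model structure. $\square^{op}\mathbf{Set}$ is the category of precubical sets, $\square[n]$ the $n$-cube and $\partial\square[n]$ its boundary (cubes of dimension $\leqslant n-1$). For a precubical set $K$, $|K|_{geom}=\int^{[n]}K_n.[0,1]^n$ is its geometric realization and each $n$-cube $c$ induces $|c|_{geom}:[0,1]^n\to|K|_{geom}$. The initial vertex of an $n$-cube $c$ is $c^-=\partial_1^0\cdots\partial_n^0c$, and $\mathcal{C}^-_\alpha(K)=\{c\in K\mid\dim(c)\geqslant1,\ c^-=\alpha\}$. Let $0_n=(0,\dots,0)$. For $n\geqslant1$, $N_n(\epsilon)$ is the set of natural directed paths $\phi:[0,\epsilon]\to[0,1]^n$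 (non-decreasing in each coordinate, with sum of coordinates equal to $t$ at time $t$), with the $\Delta$-kelleyfication of the relative topology from $\mathbf{TOP}([0,\epsilon],[0,1]^n)$. Then $\mathcal{P}^-_\alpha(K,\epsilon)=\{|c|_{geom}\phi\mid c\in\mathcal{C}^-_\alpha(K),\ \phi\in N_{\dim(c)}(\epsilon)\}$ with the $\Delta$-kelleyfication of the relative topology from $\mathbf{TOP}([0,\epsilon],|K|_{geom})$. *)

theory Defs
  imports "HOL-Analysis.Analysis" "HOL-Homology.Simplices"
begin

text \<open>Quotients, disjoint unions and colimits of Delta-generated spaces are computed
  as in the category of all topological spaces, i.e. by final topologies.\<close>
definition final_open :: "'b set \<Rightarrow> ('a topology \<times> ('a \<Rightarrow> 'b)) set \<Rightarrow> 'b set \<Rightarrow> bool" where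
  "final_open S F U \<longleftrightarrow> U \<subseteq> S \<and> (\<forall>(T, f)\<in>F. openin T {x \<in> topspace T. f x \<in> U})"

definition final_topology :: "'b set \<Rightarrow> ('a topology \<times> ('a \<Rightarrow> 'b)) set \<Rightarrow> 'b topology" where
  "final_topology S F = topology (final_open S F)"

lemma istopology_final: "istopology (final_open S F)"
  unfolding istopology_def
proof (intro conjI allI impI)
  fix U V assume U: "final_open S F U" and V: "final_open S F V"
  show "final_open S F (U \<inter> V)"
    unfolding final_open_def
  proof (intro conjI ballI)
    show "U \<inter> V \<subseteq> S" using U by (auto simp: final_open_def)
  next
    fix p assume p: "p \<in> F"
    obtain T f where pe: "p = (T, f)" by fastforce
    have "openin T ({x \<in> topspace T. f x \<in> U} \<inter> {x \<in> topspace T. f x \<in> V})"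
      using U V p pe by (intro openin_Int) (auto simp: final_open_def)
    moreover have "{x \<in> topspace T. f x \<in> U \<inter> V} =
        {x \<in> topspace T. f x \<in> U} \<inter> {x \<in> topspace T. f x \<in> V}" by blast
    ultimately show "case p of (T, f) \<Rightarrow> openin T {x \<in> topspace T. f x \<in> U \<inter> V}"
      using pe by simp
  qed
next
  fix KK assume K: "\<forall>K\<in>KK. final_open S F K"
  show "final_open S F (\<Union>KK)"
    unfolding final_open_def
  proof (intro conjI ballI)
    show "\<Union>KK \<subseteq> S" using K by (auto simp: final_open_def)
  next
    fix p assume p: "p \<in> F"
    obtain T f where pe: "p = (T, f)" by fastforce
    have "openin T (\<Union>K\<in>KK. {x \<in> topspace T. f x \<in> K})"
      using K p pe by (intro openin_Union) (auto simp: final_open_def)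
    moreover have "{x \<in> topspace T. f x \<in> \<Union>KK} = (\<Union>K\<in>KK. {x \<in> topspace T. f x \<in> K})"
      by blast
    ultimately show "case p of (T, f) \<Rightarrow> openin T {x \<in> topspace T. f x \<in> \<Union>KK}"
      using pe by simp
  qed
qed

lemma openin_final_topology:
  "openin (final_topology S F) U \<longleftrightarrow>
     U \<subseteq> S \<and> (\<forall>(T, f)\<in>F. openin T {x \<in> topspace T. f x \<in> U})"
  unfolding final_topology_def topology_inverse'[OF istopology_final] final_open_def ..

definition quotient_top :: "'a topology \<Rightarrow> 'b set \<Rightarrow> ('a \<Rightarrow> 'b) \<Rightarrow> 'b topology" where
  "quotient_top X S q = final_topology S {(X, q)}"

definition simplex_top :: "nat \<Rightarrow> (nat \<Rightarrow> real) topology" where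
  "simplex_top p = subtopology (powertop_real UNIV) (standard_simplex p)"

definition delta_kelley :: "'a topology \<Rightarrow> 'a topology" where
  "delta_kelley X = final_topology (topspace X)
     {(simplex_top p, f) | p f. continuous_map (simplex_top p) X f}"

definition cmaps :: "'a topology \<Rightarrow> 'b topology \<Rightarrow> ('a \<Rightarrow> 'b) set" where
  "cmaps X Y = {f. continuous_map X Y f \<and> f \<in> extensional (topspace X)}"

definition compact_open :: "'a topology \<Rightarrow> 'b topology \<Rightarrow> ('a \<Rightarrow> 'b) topology" where
  "compact_open X Y = topology_generated_by
     {{f \<in> cmaps X Y. f ` C \<subseteq> U} | C U. compactin X C \<and> openin Y U}"

definition TOP :: "'a topology \<Rightarrow> 'b topology \<Rightarrow> ('a \<Rightarrow> 'b) topology" where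
  "TOP X Y = delta_kelley (compact_open X Y)"

text \<open>A precubical set: sets of n-cubes and face maps \<open>face K i e c\<close> = \<open>\<partial>_i^e c\<close>
  (1 \<le> i \<le> n for an n-cube c; e = False means 0, e = True means 1).\<close>
record 'c precubical =
  cells :: "nat \<Rightarrow> 'c set"
  face  :: "nat \<Rightarrow> bool \<Rightarrow> 'c \<Rightarrow> 'c"

definition precubical_set :: "'c precubical \<Rightarrow> bool" where
  "precubical_set K \<longleftrightarrow>
     (\<forall>n c i e. c \<in> cells K (Suc n) \<and> 1 \<le> i \<and> i \<le> Suc n \<longrightarrow> face K i e c \<in> cells K n) \<and>
     (\<forall>n c i j e e'. c \<in> cells K n \<and> 1 \<le> i \<and> i < j \<and> j \<le> n \<longrightarrow>
        face K i e (face K j e' c) = face K (j - 1) e' (face K i e c))"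

text \<open>The topological cube [0,1]^n, points as functions nat \<Rightarrow> real vanishing from n on
  (coordinate k+1 is stored at index k).\<close>
definition cube :: "nat \<Rightarrow> (nat \<Rightarrow> real) set" where
  "cube n = {x. (\<forall>k<n. 0 \<le> x k \<and> x k \<le> 1) \<and> (\<forall>k\<ge>n. x k = 0)}"

definition cube_top :: "nat \<Rightarrow> (nat \<Rightarrow> real) topology" where
  "cube_top n = subtopology (powertop_real UNIV) (cube n)"

text \<open>Coface map \<open>\<delta>_i^e : [0,1]^n \<rightarrow> [0,1]^(n+1)\<close>, inserting e at coordinate i (1 \<le> i \<le> n+1).\<close>
definition coface :: "nat \<Rightarrow> nat \<Rightarrow> bool \<Rightarrow> (nat \<Rightarrow> real) \<Rightarrow> (nat \<Rightarrow> real)" where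
  "coface n i e x = (\<lambda>k. if k < i - 1 then x k
                          else if k = i - 1 then (if e then 1 else 0)
                          else if k \<le> n then x (k - 1) else 0)"

definition cells_pts :: "'c precubical \<Rightarrow> (nat \<times> 'c \<times> (nat \<Rightarrow> real)) set" where
  "cells_pts K = {(n, c, x). c \<in> cells K n \<and> x \<in> cube n}"

definition real_rel :: "'c precubical \<Rightarrow> (nat \<times> 'c \<times> (nat \<Rightarrow> real)) \<Rightarrow> (nat \<times> 'c \<times> (nat \<Rightarrow> real)) \<Rightarrow> bool" where
  "real_rel K p q \<longleftrightarrow> (\<exists>n c x i e. q = (Suc n, c, coface n i e x) \<and> p = (n, face K i e c, x) \<and>
      c \<in> cells K (Suc n) \<and> x \<in> cube n \<and> 1 \<le> i \<and> i \<le> Suc n)"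

definition real_class :: "'c precubical \<Rightarrow> (nat \<times> 'c \<times> (nat \<Rightarrow> real)) \<Rightarrow> (nat \<times> 'c \<times> (nat \<Rightarrow> real)) set" where
  "real_class K p = {q. equivclp (real_rel K) p q}"

definition real_points :: "'c precubical \<Rightarrow> (nat \<times> 'c \<times> (nat \<Rightarrow> real)) set set" where
  "real_points K = real_class K ` cells_pts K"

definition geom_real :: "'c precubical \<Rightarrow> (nat \<times> 'c \<times> (nat \<Rightarrow> real)) set topology" where
  "geom_real K = final_topology (real_points K)
     {(cube_top n, \<lambda>x. real_class K (n, c, x)) | n c. c \<in> cells K n}"

definition cell_map :: "'c precubical \<Rightarrow> nat \<Rightarrow> 'c \<Rightarrow> (nat \<Rightarrow> real) \<Rightarrow> (nat \<times> 'c \<times> (nat \<Rightarrow> real)) set" where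
  "cell_map K n c x = real_class K (n, c, x)"

definition real_map :: "'c precubical \<Rightarrow> 'd precubical \<Rightarrow> ('c \<Rightarrow> 'd)
     \<Rightarrow> (nat \<times> 'c \<times> (nat \<Rightarrow> real)) set \<Rightarrow> (nat \<times> 'd \<times> (nat \<Rightarrow> real)) set" where
  "real_map K L f p = (let (n, c, x) = (SOME r. r \<in> p) in real_class L (n, f c, x))"

fun init_vertex :: "'c precubical \<Rightarrow> nat \<Rightarrow> 'c \<Rightarrow> 'c" where
  "init_vertex K 0 c = c"
| "init_vertex K (Suc n) c = init_vertex K n (face K (Suc n) False c)"

definition init_cubes :: "'c precubical \<Rightarrow> 'c \<Rightarrow> (nat \<times> 'c) set" where
  "init_cubes K \<alpha> = {(n, c). 1 \<le> n \<and> c \<in> cells K n \<and> init_vertex K n c = \<alpha>}"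

definition natural_paths :: "nat \<Rightarrow> real \<Rightarrow> (real \<Rightarrow> nat \<Rightarrow> real) set" where
  "natural_paths n \<epsilon> = {\<phi> \<in> cmaps (top_of_set {0..\<epsilon>}) (cube_top n).
      (\<forall>s t k. 0 \<le> s \<and> s \<le> t \<and> t \<le> \<epsilon> \<and> k < n \<longrightarrow> \<phi> s k \<le> \<phi> t k) \<and>
      (\<forall>t\<in>{0..\<epsilon>}. (\<Sum>k<n. \<phi> t k) = t)}"

definition branch_paths :: "'c precubical \<Rightarrow> 'c \<Rightarrow> real \<Rightarrow> (real \<Rightarrow> (nat \<times> 'c \<times> (nat \<Rightarrow> real)) set) set" where
  "branch_paths K \<alpha> \<epsilon> = {restrict (cell_map K n c \<circ> \<phi>) {0..\<epsilon>} | n c \<phi>.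
      (n, c) \<in> init_cubes K \<alpha> \<and> \<phi> \<in> natural_paths n \<epsilon>}"

definition branch_space :: "'c precubical \<Rightarrow> 'c \<Rightarrow> real \<Rightarrow> (real \<Rightarrow> (nat \<times> 'c \<times> (nat \<Rightarrow> real)) set) topology" where
  "branch_space K \<alpha> \<epsilon> =
     delta_kelley (subtopology (TOP (top_of_set {0..\<epsilon>}) (geom_real K)) (branch_paths K \<alpha> \<epsilon>))"

definition germ_rel :: "'c precubical \<Rightarrow> 'c \<Rightarrow> real \<Rightarrow> ((real \<Rightarrow> (nat \<times> 'c \<times> (nat \<Rightarrow> real)) set) \<times> (real \<Rightarrow> (nat \<times> 'c \<times> (nat \<Rightarrow> real)) set)) set" where
  "germ_rel K \<alpha> \<epsilon> = {(\<gamma>1, \<gamma>2). \<gamma>1 \<in> branch_paths K \<alpha> \<epsilon> \<and> \<gamma>2 \<in> branch_paths K \<alpha> \<epsilon> \<and>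
      (\<exists>\<epsilon>'. 0 < \<epsilon>' \<and> \<epsilon>' < \<epsilon> \<and> (\<forall>t\<in>{0..\<epsilon>'}. \<gamma>1 t = \<gamma>2 t))}"

definition germ_space :: "'c precubical \<Rightarrow> 'c \<Rightarrow> real \<Rightarrow> (real \<Rightarrow> (nat \<times> 'c \<times> (nat \<Rightarrow> real)) set) set topology" where
  "germ_space K \<alpha> \<epsilon> = quotient_top (branch_space K \<alpha> \<epsilon>)
     (branch_paths K \<alpha> \<epsilon> // germ_rel K \<alpha> \<epsilon>) (\<lambda>\<gamma>. germ_rel K \<alpha> \<epsilon> `` {\<gamma>})"

definition germ_map :: "'c precubical \<Rightarrow> 'd precubical \<Rightarrow> ('c \<Rightarrow> 'd) \<Rightarrow> 'd \<Rightarrow> real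
   \<Rightarrow> (real \<Rightarrow> (nat \<times> 'c \<times> (nat \<Rightarrow> real)) set) set \<Rightarrow> (real \<Rightarrow> (nat \<times> 'd \<times> (nat \<Rightarrow> real)) set) set" where
  "germ_map K L f \<beta> \<epsilon> q =
     germ_rel L \<beta> \<epsilon> `` {restrict (real_map K L f \<circ> (SOME \<gamma>. \<gamma> \<in> q)) {0..\<epsilon>}}"

text \<open>Cubes of \<open>\<square>[n]\<close>: words in {0,1,*}^n (None = *), dimension = number of *;
  \<open>\<partial>_i^e\<close> replaces the i-th * by e.\<close>
fun replace_star :: "nat \<Rightarrow> bool \<Rightarrow> bool option list \<Rightarrow> bool option list" where
  "replace_star i e [] = []"
| "replace_star i e (None # w) =
     (if i = 1 then Some e # w else None # replace_star (i - 1) e w)"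
| "replace_star i e (Some b # w) = Some b # replace_star i e w"

definition std_cube :: "nat \<Rightarrow> bool option list precubical" where
  "std_cube m = \<lparr> cells = (\<lambda>n. {w. length w = m \<and> length (filter (\<lambda>a. a = None) w) = n}),
                  face = replace_star \<rparr>"

definition bdry_cube :: "nat \<Rightarrow> bool option list precubical" where
  "bdry_cube m = \<lparr> cells = (\<lambda>n. if n < m then cells (std_cube m) n else {}),
                   face = replace_star \<rparr>"

definition zero_vertex :: "nat \<Rightarrow> bool option list" where
  "zero_vertex m = replicate m (Some False)"

text \<open>g is a closed inclusion: a homeomorphism of X onto a closed subset of Y,
  the subset carrying the subspace topology of Delta-generated spaces.\<close>
definition closed_inclusion :: "'a topology \<Rightarrow> 'b topology \<Rightarrow> ('a \<Rightarrow> 'b) \<Rightarrow> bool" where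
  "closed_inclusion X Y g \<longleftrightarrow>
     g ` topspace X \<subseteq> topspace Y \<and> closedin Y (g ` topspace X) \<and>
     homeomorphic_map X (delta_kelley (subtopology Y (g ` topspace X))) g"

end

theory Submission
  imports Defs
begin


lemma topspace_final:
  assumes "\<And>T f. (T, f) \<in> F \<Longrightarrow> f ` topspace T \<subseteq> S"
  shows "topspace (final_topology S F) = S"
proof -
  have "openin (final_topology S F) S"
    unfolding openin_final_topology
  proof (intro conjI ballI; clarify?)
    fix T f assume "(T, f) \<in> F"
    then have "{x \<in> topspace T. f x \<in> S} = topspace T" using assms by blast
    then show "openin T {x \<in> topspace T. f x \<in> S}" by simp
  qed
  moreover have "\<And>U. openin (final_topology S F) U \<Longrightarrow> U \<subseteq> S"
    by (simp add: openin_final_topology)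
  ultimately show ?thesis
    by (metis openin_subset openin_topspace subset_antisym)
qed

lemma continuous_map_final:
  assumes "\<And>T f. (T, f) \<in> F \<Longrightarrow> f ` topspace T \<subseteq> S" and "(T, f) \<in> F"
  shows "continuous_map T (final_topology S F) f"
proof -
  have ts: "topspace (final_topology S F) = S" by (rule topspace_final) (rule assms(1))
  show ?thesis unfolding continuous_map ts using assms by (auto simp: openin_final_topology)
qed

lemma topspace_delta_kelley: "topspace (delta_kelley X) = topspace X"
  unfolding delta_kelley_def
  by (rule topspace_final) (auto dest: continuous_map_image_subset_topspace)

lemma continuous_map_delta_kelley:
  assumes "continuous_map (simplex_top p) X f"
  shows "continuous_map (simplex_top p) (delta_kelley X) f"
  unfolding delta_kelley_def
  by (rule continuous_map_final) (use assms in \<open>auto dest: continuous_map_image_subset_topspace\<close>)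

lemma openin_delta_kelley_pre:
  assumes "openin (delta_kelley X) U" "continuous_map (simplex_top p) X f"
  shows "openin (simplex_top p) {x \<in> topspace (simplex_top p). f x \<in> U}"
  using assms unfolding delta_kelley_def openin_final_topology by blast

lemma topspace_compact_open: "topspace (compact_open X Y) = cmaps X Y"
proof -
  have "cmaps X Y \<in> {{f \<in> cmaps X Y. f ` C \<subseteq> U} | C U. compactin X C \<and> openin Y U}"
    by (rule CollectI, rule exI[of _ "{}"], rule exI[of _ "topspace Y"]) auto
  then show ?thesis unfolding compact_open_def topology_generated_by_topspace by blast
qed

lemma continuous_map_compact_open:
  assumes img: "f ` topspace Z \<subseteq> cmaps X Y"
    and sub: "\<And>C U. compactin X C \<Longrightarrow> openin Y U \<Longrightarrow> openin Z {z \<in> topspace Z. f z ` C \<subseteq> U}"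
  shows "continuous_map Z (compact_open X Y) f"
  unfolding continuous_map topspace_compact_open
proof (intro conjI allI impI)
  show "f ` topspace Z \<subseteq> cmaps X Y" by fact
  fix V assume "openin (compact_open X Y) V"
  then have "generate_topology_on {{f \<in> cmaps X Y. f ` C \<subseteq> U} | C U. compactin X C \<and> openin Y U} V"
    unfolding compact_open_def by (rule openin_topology_generated_by)
  then show "openin Z {x \<in> topspace Z. f x \<in> V}"
  proof induction
    case Empty then show ?case by simp
  next
    case (Int a b)
    have "{x \<in> topspace Z. f x \<in> a \<inter> b} = {x \<in> topspace Z. f x \<in> a} \<inter> {x \<in> topspace Z. f x \<in> b}" by blast
    then show ?case using Int by (simp add: openin_Int)
  next
    case (UN K)
    have "{x \<in> topspace Z. f x \<in> \<Union>K} = (\<Union>k\<in>K. {x \<in> topspace Z. f x \<in> k})" by blast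
    then show ?case using UN by (auto intro!: openin_Union)
  next
    case (Basis s)
    then obtain C U where s: "s = {g \<in> cmaps X Y. g ` C \<subseteq> U}" "compactin X C" "openin Y U" by blast
    have "{x \<in> topspace Z. f x \<in> s} = {z \<in> topspace Z. f z ` C \<subseteq> U}" using img s(1) by blast
    then show ?case using sub s by simp
  qed
qed



definition crd :: "bool option list \<Rightarrow> (nat \<Rightarrow> real) \<Rightarrow> nat \<Rightarrow> real" where
  "crd w x j = (case w ! j of Some b \<Rightarrow> (if b then 1 else 0)
                 | None \<Rightarrow> x (length (filter (\<lambda>a. a = None) (take j w))))"

definition emb2 :: "nat \<times> bool option list \<times> (nat \<Rightarrow> real) \<Rightarrow> real \<times> real" where
  "emb2 p = (case p of (n, w, x) \<Rightarrow> (crd w x 0, crd w x 1))"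

lemma len2_cases:
  assumes "length (w :: bool option list) = 2"
  obtains a b where "w = [a, b]"
  using assms by (metis (no_types) One_nat_def Suc_length_conv length_0_conv numeral_2_eq_2)

lemma real_rel_emb2:
  assumes "real_rel (std_cube 2) p q"
  shows "emb2 p = emb2 q"
proof -
  obtain n c x i e where q: "q = (Suc n, c, coface n i e x)" and p: "p = (n, face (std_cube 2) i e c, x)"
    and c: "c \<in> cells (std_cube 2) (Suc n)" and x: "x \<in> cube n" and i: "1 \<le> i" "i \<le> Suc n"
    using assms unfolding real_rel_def by blast
  from c have lc: "length c = 2" and nc: "length (filter (\<lambda>a. a = None) c) = Suc n"
    by (auto simp: std_cube_def)
  obtain a b where ab: "c = [a, b]" using len2_cases[OF lc] .
  show ?thesis
    using nc i unfolding p q ab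
    by (cases a; cases b; cases e; cases n; cases i)
       (auto simp: emb2_def crd_def coface_def std_cube_def split: if_splits)
qed



abbreviation "K2 \<equiv> std_cube 2"
abbreviation "B2 \<equiv> bdry_cube 2"

lemma equivclp_emb2:
  assumes "equivclp (real_rel K2) p q" shows "emb2 p = emb2 q"
  using assms
proof (induction rule: equivclp_induct)
  case base then show ?case by simp
next
  case (step y z) then show ?case using real_rel_emb2 by metis
qed

lemma real_class_emb2:
  assumes "real_class K2 p = real_class K2 p'" shows "emb2 p = emb2 p'"
proof -
  have "equivclp (real_rel K2) p p'" using assms unfolding real_class_def
    by (metis mem_Collect_eq equivclp_refl)
  then show ?thesis by (rule equivclp_emb2)
qed

lemma real_rel_B2_K2: "real_rel B2 p q \<Longrightarrow> real_rel K2 p q"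
  unfolding real_rel_def bdry_cube_def std_cube_def
  apply (simp split: if_splits) by blast

lemma equivclp_B2_K2:
  assumes "equivclp (real_rel B2) p q" shows "equivclp (real_rel K2) p q"
  using assms
proof (induction rule: equivclp_induct)
  case base then show ?case by simp
next
  case (step y z) then show ?case using real_rel_B2_K2 equivclp_into_equivclp by metis
qed

lemma real_class_eqI:
  assumes "equivclp r p q"
  shows "{x. equivclp r p x} = {x. equivclp r q x}"
  using assms by (auto intro: equivclp_trans equivclp_sym)

lemma real_map_B2: "real_map B2 K2 id (real_class B2 p) = real_class K2 p"
proof -
  obtain n c x where r: "(SOME r. r \<in> real_class B2 p) = (n, c, x)" by (metis prod_cases3)
  have "p \<in> real_class B2 p" by (simp add: real_class_def)
  then have "(SOME r. r \<in> real_class B2 p) \<in> real_class B2 p" by (rule someI)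
  then have "equivclp (real_rel B2) p (n, c, x)" using r by (simp add: real_class_def)
  then have "equivclp (real_rel K2) p (n, c, x)" by (rule equivclp_B2_K2)
  then have "real_class K2 (n, c, x) = real_class K2 p"
    unfolding real_class_def by (metis real_class_eqI equivclp_sym)
  then show ?thesis unfolding real_map_def r by simp
qed

lemma init_vertex_face: "face K = face L \<Longrightarrow> init_vertex K n c = init_vertex L n c"
  by (induction n arbitrary: c) auto

lemma init_cubes_B2_K2: "init_cubes B2 \<alpha> \<subseteq> init_cubes K2 \<alpha>"
proof -
  have "face B2 = face K2" by (simp add: bdry_cube_def std_cube_def)
  then show ?thesis unfolding init_cubes_def using init_vertex_face[of B2 K2]
    by (auto simp: bdry_cube_def std_cube_def split: if_splits)
qed

lemma init_cubes_B2:
  assumes "(n, c) \<in> init_cubes B2 (zero_vertex 2)"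
  shows "n = 1 \<and> (c = [None, Some False] \<or> c = [Some False, None])"
proof -
  from assms have n: "1 \<le> n" "n < 2" and lc: "length c = 2"
    and nc: "length (filter (\<lambda>a. a = None) c) = n"
    and iv: "init_vertex B2 n c = zero_vertex 2"
    by (auto simp: init_cubes_def bdry_cube_def std_cube_def split: if_splits)
  then have n1: "n = 1" by simp
  obtain a b where ab: "c = [a, b]" using len2_cases[OF lc] .
  show ?thesis using nc iv unfolding n1 ab
    by (cases a; cases b) (auto simp: bdry_cube_def zero_vertex_def numeral_2_eq_2 split: if_splits)
qed



lemma equiv_germ_rel:
  assumes "0 < \<epsilon>" shows "equiv (branch_paths K \<alpha> \<epsilon>) (germ_rel K \<alpha> \<epsilon>)"
proof (rule equivI)
  show "germ_rel K \<alpha> \<epsilon> \<subseteq> branch_paths K \<alpha> \<epsilon> \<times> branch_paths K \<alpha> \<epsilon>"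
    by (auto simp: germ_rel_def)
  show "refl_on (branch_paths K \<alpha> \<epsilon>) (germ_rel K \<alpha> \<epsilon>)"
    unfolding refl_on_def
  proof (intro conjI ballI)
    fix x assume "x \<in> branch_paths K \<alpha> \<epsilon>"
    then show "(x, x) \<in> germ_rel K \<alpha> \<epsilon>" using assms
      by (auto simp: germ_rel_def intro!: exI[of _ "\<epsilon>/2"])
  qed
  show "sym (germ_rel K \<alpha> \<epsilon>)" unfolding sym_def germ_rel_def by auto
  show "trans (germ_rel K \<alpha> \<epsilon>)" unfolding trans_def germ_rel_def
  proof (clarsimp)
    fix x y z e1 e2
    assume "0 < (e1::real)" "e1 < \<epsilon>" "\<forall>t\<in>{0..e1}. x t = y t" "0 < (e2::real)" "e2 < \<epsilon>"
      "\<forall>t\<in>{0..e2}. y t = z t"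
    then show "\<exists>\<epsilon>'>0. \<epsilon>' < \<epsilon> \<and> (\<forall>t\<in>{0..\<epsilon>'}. x t = z t)"
      by (intro exI[of _ "min e1 e2"]) auto
  qed
qed

lemma topspace_branch_space: "topspace (branch_space K \<alpha> \<epsilon>) \<subseteq> branch_paths K \<alpha> \<epsilon>"
  unfolding branch_space_def topspace_delta_kelley by simp

lemma topspace_germ_space:
  assumes "0 < \<epsilon>"
  shows "topspace (germ_space K \<alpha> \<epsilon>) = branch_paths K \<alpha> \<epsilon> // germ_rel K \<alpha> \<epsilon>"
  unfolding germ_space_def quotient_top_def
  by (rule topspace_final) (auto intro!: quotientI dest!: subsetD[OF topspace_branch_space])

definition Phi :: "real \<Rightarrow> real \<Rightarrow> real \<Rightarrow> nat \<Rightarrow> real" where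
  "Phi \<epsilon> s t = (\<lambda>k. if k = 0 then (t + min t (s * \<epsilon> / 2)) / 2
                   else if k = 1 then (t - min t (s * \<epsilon> / 2)) / 2 else 0)"

definition fam :: "real \<Rightarrow> real \<Rightarrow> real \<Rightarrow> (nat \<times> bool option list \<times> (nat \<Rightarrow> real)) set" where
  "fam \<epsilon> s = restrict (\<lambda>t. real_class K2 (2, [None, None], Phi \<epsilon> s t)) {0..\<epsilon>}"

definition edge :: "real \<Rightarrow> nat \<Rightarrow> real" where
  "edge t = (\<lambda>k. if k = 0 then t else 0)"

lemma Phi_cube: "0 \<le> s \<Longrightarrow> 0 \<le> \<epsilon> \<Longrightarrow> 0 \<le> t \<Longrightarrow> t \<le> 1 \<Longrightarrow> Phi \<epsilon> s t \<in> cube 2"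
proof -
  assume a: "0 \<le> s" "0 \<le> \<epsilon>" "0 \<le> t" "t \<le> 1"
  then have "0 \<le> s * \<epsilon>" by simp
  then show ?thesis unfolding Phi_def cube_def using a
    apply (auto simp: min_def) using mult_nonneg_nonneg[OF a(1) a(2)] by linarith+
qed

lemma continuous_Phi:
  "continuous_map (top_of_set S) (powertop_real UNIV) (\<lambda>p. Phi \<epsilon> (fst p) (snd p))"
  unfolding continuous_map_componentwise_UNIV
proof
  fix k
  show "continuous_map (top_of_set S) euclideanreal (\<lambda>x. Phi \<epsilon> (fst x) (snd x) k)"
    unfolding Phi_def continuous_map_iff_continuous
    by (cases "k = 0"; cases "k = 1") (auto intro!: continuous_intros)
qed

lemma continuous_Phi_t:
  "continuous_map (top_of_set S) (powertop_real UNIV) (Phi \<epsilon> s)"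
  unfolding continuous_map_componentwise_UNIV
proof
  fix k
  show "continuous_map (top_of_set S) euclideanreal (\<lambda>x. Phi \<epsilon> s x k)"
    unfolding Phi_def continuous_map_iff_continuous
    by (cases "k = 0"; cases "k = 1") (auto intro!: continuous_intros)
qed

lemma Phi_natural:
  assumes "0 \<le> s" "0 < \<epsilon>" "\<epsilon> < 1"
  shows "restrict (Phi \<epsilon> s) {0..\<epsilon>} \<in> natural_paths 2 \<epsilon>"
  unfolding natural_paths_def cmaps_def
proof (intro CollectI conjI allI impI ballI)
  show "continuous_map (top_of_set {0..\<epsilon>}) (cube_top 2) (restrict (Phi \<epsilon> s) {0..\<epsilon>})"
    unfolding cube_top_def
  proof (rule continuous_map_eq[where f = "Phi \<epsilon> s"])
    show "continuous_map (top_of_set {0..\<epsilon>}) (subtopology (powertop_real UNIV) (cube 2)) (Phi \<epsilon> s)"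
      using assms by (auto intro!: continuous_map_into_subtopology continuous_Phi_t Phi_cube)
  qed simp
  show "restrict (Phi \<epsilon> s) {0..\<epsilon>} \<in> extensional (topspace (top_of_set {0..\<epsilon>}))" by simp
  fix s' t and k :: nat assume "0 \<le> s' \<and> s' \<le> t \<and> t \<le> \<epsilon> \<and> k < 2"
  then show "restrict (Phi \<epsilon> s) {0..\<epsilon>} s' k \<le> restrict (Phi \<epsilon> s) {0..\<epsilon>} t k"
    by (auto simp: Phi_def min_def)
next
  fix t assume "t \<in> {0..\<epsilon>}"
  then show "(\<Sum>k<2. restrict (Phi \<epsilon> s) {0..\<epsilon>} t k) = t"
    by (simp add: Phi_def numeral_2_eq_2 field_simps)
qed

lemma init_NN: "(2, [None, None]) \<in> init_cubes K2 (zero_vertex 2)"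
  by (simp add: init_cubes_def std_cube_def zero_vertex_def numeral_2_eq_2)

lemma fam_bp:
  assumes "0 \<le> s" "0 < \<epsilon>" "\<epsilon> < 1"
  shows "fam \<epsilon> s \<in> branch_paths K2 (zero_vertex 2) \<epsilon>"
proof -
  have "fam \<epsilon> s = restrict (cell_map K2 2 [None, None] \<circ> restrict (Phi \<epsilon> s) {0..\<epsilon>}) {0..\<epsilon>}"
    by (rule ext) (simp add: fam_def cell_map_def restrict_def)
  then show ?thesis unfolding branch_paths_def using init_NN Phi_natural[OF assms] by blast
qed

lemma edge_natural:
  assumes "0 < \<epsilon>" "\<epsilon> < 1"
  shows "restrict edge {0..\<epsilon>} \<in> natural_paths 1 \<epsilon>"
  unfolding natural_paths_def cmaps_def
proof (intro CollectI conjI allI impI ballI)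
  show "continuous_map (top_of_set {0..\<epsilon>}) (cube_top 1) (restrict edge {0..\<epsilon>})"
    unfolding cube_top_def
  proof (rule continuous_map_eq[where f = edge])
    have "continuous_map (top_of_set {0..\<epsilon>}) (powertop_real UNIV) edge"
      unfolding continuous_map_componentwise_UNIV edge_def
      by (auto simp: continuous_map_iff_continuous intro!: continuous_intros)
    then show "continuous_map (top_of_set {0..\<epsilon>}) (subtopology (powertop_real UNIV) (cube 1)) edge"
      using assms by (auto intro!: continuous_map_into_subtopology simp: cube_def edge_def)
  qed simp
  show "restrict edge {0..\<epsilon>} \<in> extensional (topspace (top_of_set {0..\<epsilon>}))" by simp
  fix s' t and k :: nat assume "0 \<le> s' \<and> s' \<le> t \<and> t \<le> \<epsilon> \<and> k < 1"
  then show "restrict edge {0..\<epsilon>} s' k \<le> restrict edge {0..\<epsilon>} t k"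
    by (auto simp: edge_def)
next
  fix t assume "t \<in> {0..\<epsilon>}"
  then show "(\<Sum>k<1. restrict edge {0..\<epsilon>} t k) = t"
    by (simp add: edge_def)
qed

definition gedge :: "real \<Rightarrow> real \<Rightarrow> (nat \<times> bool option list \<times> (nat \<Rightarrow> real)) set" where
  "gedge \<epsilon> = restrict (\<lambda>t. real_class B2 (1, [None, Some False], edge t)) {0..\<epsilon>}"

lemma init_E: "(1, [None, Some False]) \<in> init_cubes B2 (zero_vertex 2)"
  by (simp add: init_cubes_def bdry_cube_def std_cube_def zero_vertex_def numeral_2_eq_2)

lemma gedge_bp:
  assumes "0 < \<epsilon>" "\<epsilon> < 1"
  shows "gedge \<epsilon> \<in> branch_paths B2 (zero_vertex 2) \<epsilon>"
proof -
  have "gedge \<epsilon> = restrict (cell_map B2 1 [None, Some False] \<circ> restrict edge {0..\<epsilon>}) {0..\<epsilon>}"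
    by (rule ext) (simp add: gedge_def cell_map_def restrict_def)
  then show ?thesis unfolding branch_paths_def using init_E edge_natural[OF assms] by blast
qed

lemma edge_class:
  assumes "0 \<le> t" "t \<le> 1"
  shows "real_class K2 (1, [None, Some False], edge t) = real_class K2 (2, [None, None], edge t)"
proof -
  have "real_rel K2 (1, [None, Some False], edge t) (2, [None, None], edge t)"
    unfolding real_rel_def
    apply (rule exI[of _ 1], rule exI[of _ "[None, None]"], rule exI[of _ "edge t"],
           rule exI[of _ 2], rule exI[of _ False])
    using assms by (auto simp: coface_def edge_def std_cube_def cube_def numeral_2_eq_2)
  then show ?thesis unfolding real_class_def
    by (metis real_class_eqI r_into_equivclp)
qed

lemma Phi_edge: "0 \<le> t \<Longrightarrow> t \<le> s * \<epsilon> / 2 \<Longrightarrow> Phi \<epsilon> s t = edge t"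
  by (auto simp: Phi_def edge_def)



lemma topspace_geom_real: "topspace (geom_real K) = real_points K"
  unfolding geom_real_def
  by (rule topspace_final) (auto simp: real_points_def cells_pts_def cube_top_def)

lemma continuous_cell:
  assumes "c \<in> cells K n"
  shows "continuous_map (cube_top n) (geom_real K) (\<lambda>x. real_class K (n, c, x))"
  unfolding geom_real_def
  by (rule continuous_map_final) (use assms in \<open>auto simp: real_points_def cells_pts_def cube_top_def\<close>)

lemma NN_cell: "[None, None] \<in> cells K2 2"
  by (simp add: std_cube_def)

lemma continuous_G:
  assumes "0 \<le> \<epsilon>" "\<epsilon> \<le> 1"
  shows "continuous_map (top_of_set ({0..1} \<times> {0..\<epsilon>})) (geom_real K2)
           (\<lambda>p. real_class K2 (2, [None, None], Phi \<epsilon> (fst p) (snd p)))"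
proof -
  have "continuous_map (top_of_set ({0..1} \<times> {0..\<epsilon>})) (cube_top 2) (\<lambda>p. Phi \<epsilon> (fst p) (snd p))"
    unfolding cube_top_def using assms
    by (auto intro!: continuous_map_into_subtopology continuous_Phi Phi_cube)
  then show ?thesis
    using continuous_map_compose[OF _ continuous_cell[OF NN_cell]] by (simp add: o_def)
qed

lemma fam_cmaps:
  assumes "0 \<le> s" "0 \<le> \<epsilon>" "\<epsilon> \<le> 1"
  shows "fam \<epsilon> s \<in> cmaps (top_of_set {0..\<epsilon>}) (geom_real K2)"
  unfolding cmaps_def
proof (intro CollectI conjI)
  have "continuous_map (top_of_set {0..\<epsilon>}) (cube_top 2) (Phi \<epsilon> s)"
    unfolding cube_top_def using assms
    by (auto intro!: continuous_map_into_subtopology continuous_Phi_t Phi_cube)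
  then have "continuous_map (top_of_set {0..\<epsilon>}) (geom_real K2) (\<lambda>t. real_class K2 (2, [None, None], Phi \<epsilon> s t))"
    using continuous_map_compose[OF _ continuous_cell[OF NN_cell]] by (simp add: o_def)
  then show "continuous_map (top_of_set {0..\<epsilon>}) (geom_real K2) (fam \<epsilon> s)"
    by (rule continuous_map_eq) (simp add: fam_def)
  show "fam \<epsilon> s \<in> extensional (topspace (top_of_set {0..\<epsilon>}))" by (simp add: fam_def)
qed

lemma fam_open:
  assumes eps: "0 \<le> \<epsilon>" "\<epsilon> \<le> 1" and C: "compactin (top_of_set {0..\<epsilon>}) C"
    and U: "openin (geom_real K2) U"
  shows "openin (top_of_set {0..1}) {s \<in> {0..1}. fam \<epsilon> s ` C \<subseteq> U}"
proof -
  define G where "G = (\<lambda>p. real_class K2 (2, [None, None], Phi \<epsilon> (fst p) (snd p)))"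
  have "openin (top_of_set ({0..1} \<times> {0..\<epsilon>})) {p \<in> topspace (top_of_set ({0..1} \<times> {0..\<epsilon>})). G p \<in> U}"
    using continuous_G[OF eps] U unfolding G_def continuous_map by blast
  then obtain Ow where Ow: "open Ow" "{p \<in> {0..1} \<times> {0..\<epsilon>}. G p \<in> U} = ({0..1} \<times> {0..\<epsilon>}) \<inter> Ow"
    by (auto simp: openin_open)
  from C have Cc: "compact C" and Csub: "C \<subseteq> {0..\<epsilon>}"
    by (auto simp: compactin_subtopology)
  show ?thesis
  proof (subst openin_subopen, intro ballI)
    fix s0 assume s0: "s0 \<in> {s \<in> {0..1}. fam \<epsilon> s ` C \<subseteq> U}"
    have "{s0} \<times> C \<subseteq> Ow"
    proof clarify
      fix t assume t: "t \<in> C"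
      then have "fam \<epsilon> s0 t \<in> U" using s0 by blast
      moreover have "t \<in> {0..\<epsilon>}" using t Csub by blast
      ultimately have "G (s0, t) \<in> U" "(s0, t) \<in> {0..1} \<times> {0..\<epsilon>}"
        using s0 by (auto simp: fam_def G_def)
      then show "(s0, t) \<in> Ow" using Ow(2) by blast
    qed
    then obtain X0 where X0: "s0 \<in> X0" "open X0" "X0 \<times> C \<subseteq> Ow"
      using Elementary_Topology.tube_lemma[OF Cc Ow(1)] by blast
    show "\<exists>T. openin (top_of_set {0..1}) T \<and> s0 \<in> T \<and> T \<subseteq> {s \<in> {0..1}. fam \<epsilon> s ` C \<subseteq> U}"
    proof (intro exI conjI)
      show "openin (top_of_set {0..1}) ({0..1} \<inter> X0)" using X0(2) by (auto simp: openin_open)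
      show "s0 \<in> {0..1} \<inter> X0" using s0 X0 by auto
      show "{0..1} \<inter> X0 \<subseteq> {s \<in> {0..1}. fam \<epsilon> s ` C \<subseteq> U}"
      proof clarify
        fix s t assume st: "s \<in> {0..1}" "s \<in> X0" "t \<in> C"
        then have "(s, t) \<in> ({0..1} \<times> {0..\<epsilon>}) \<inter> Ow" using X0(3) Csub by auto
        then have "G (s, t) \<in> U" using Ow(2) by blast
        then show "fam \<epsilon> s t \<in> U" using st Csub by (auto simp: fam_def G_def)
      qed
    qed
  qed
qed

lemma continuous_coord1: "continuous_map (simplex_top 1) (top_of_set {0..1}) (\<lambda>x. x 1)"
proof -
  have "continuous_map (simplex_top 1) euclideanreal (\<lambda>x. x 1)"
    unfolding simplex_top_def
    by (rule continuous_map_from_subtopology, rule continuous_map_product_projection, simp)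
  moreover have "(\<lambda>x. x 1) ` topspace (simplex_top 1) \<subseteq> {0..1}"
    by (auto simp: simplex_top_def standard_simplex_def)
  ultimately show ?thesis by (auto simp: continuous_map_in_subtopology)
qed

lemma continuous_fam:
  assumes "0 < \<epsilon>" "\<epsilon> < 1"
  shows "continuous_map (simplex_top 1)
     (subtopology (TOP (top_of_set {0..\<epsilon>}) (geom_real K2)) (branch_paths K2 (zero_vertex 2) \<epsilon>))
     (\<lambda>x. fam \<epsilon> (x 1))"
proof (rule continuous_map_into_subtopology)
  have ts: "\<And>x. x \<in> topspace (simplex_top 1) \<Longrightarrow> x 1 \<in> {0..1}"
    using continuous_map_image_subset_topspace[OF continuous_coord1] by auto
  show "(\<lambda>x. fam \<epsilon> (x 1)) \<in> topspace (simplex_top 1) \<rightarrow> branch_paths K2 (zero_vertex 2) \<epsilon>"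
    using ts fam_bp assms by force
  show "continuous_map (simplex_top 1) (TOP (top_of_set {0..\<epsilon>}) (geom_real K2)) (\<lambda>x. fam \<epsilon> (x 1))"
    unfolding TOP_def
  proof (intro continuous_map_delta_kelley continuous_map_compact_open)
    show "(\<lambda>x. fam \<epsilon> (x 1)) ` topspace (simplex_top 1) \<subseteq> cmaps (top_of_set {0..\<epsilon>}) (geom_real K2)"
      using ts fam_cmaps assms by force
    fix C U assume C: "compactin (top_of_set {0..\<epsilon>}) C" and U: "openin (geom_real K2) U"
    have "openin (simplex_top 1) {x \<in> topspace (simplex_top 1). x 1 \<in> {s \<in> {0..1}. fam \<epsilon> s ` C \<subseteq> U}}"
      using continuous_coord1 fam_open[OF _ _ C U] assms unfolding continuous_map by auto
    moreover have "{x \<in> topspace (simplex_top 1). x 1 \<in> {s \<in> {0..1}. fam \<epsilon> s ` C \<subseteq> U}}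
        = {x \<in> topspace (simplex_top 1). fam \<epsilon> (x 1) ` C \<subseteq> U}" using ts by auto
    ultimately show "openin (simplex_top 1) {x \<in> topspace (simplex_top 1). fam \<epsilon> (x 1) ` C \<subseteq> U}" by simp
  qed
qed



abbreviation "z2 \<equiv> zero_vertex 2"

lemma bp_B2_form:
  assumes "\<gamma> \<in> branch_paths B2 z2 \<epsilon>"
  obtains c \<phi> where "(1, c) \<in> init_cubes B2 z2" "c = [None, Some False] \<or> c = [Some False, None]"
    "\<phi> \<in> natural_paths 1 \<epsilon>" "\<gamma> = restrict (cell_map B2 1 c \<circ> \<phi>) {0..\<epsilon>}"
proof -
  from assms obtain n c \<phi> where "(n, c) \<in> init_cubes B2 z2" "\<phi> \<in> natural_paths n \<epsilon>"
    "\<gamma> = restrict (cell_map B2 n c \<circ> \<phi>) {0..\<epsilon>}"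
    unfolding branch_paths_def by blast
  with init_cubes_B2 that show ?thesis by metis
qed

lemma real_map_path:
  assumes "\<gamma> \<in> branch_paths B2 z2 \<epsilon>"
  shows "restrict (real_map B2 K2 id \<circ> \<gamma>) {0..\<epsilon>} \<in> branch_paths K2 z2 \<epsilon>"
proof -
  obtain c \<phi> where c: "(1, c) \<in> init_cubes B2 z2" "\<phi> \<in> natural_paths 1 \<epsilon>"
    "\<gamma> = restrict (cell_map B2 1 c \<circ> \<phi>) {0..\<epsilon>}"
    using bp_B2_form[OF assms] by metis
  have "restrict (real_map B2 K2 id \<circ> \<gamma>) {0..\<epsilon>} = restrict (cell_map K2 1 c \<circ> \<phi>) {0..\<epsilon>}"
    unfolding c(3) by (rule ext) (simp add: cell_map_def real_map_B2)
  moreover have "(1, c) \<in> init_cubes K2 z2" using c(1) init_cubes_B2_K2 by blast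
  ultimately show ?thesis using c(2) unfolding branch_paths_def by blast
qed

lemma natural1: "\<phi> \<in> natural_paths 1 \<epsilon> \<Longrightarrow> t \<in> {0..\<epsilon>} \<Longrightarrow> \<phi> t 0 = t \<and> \<phi> t \<in> cube 1"
proof -
  assume p: "\<phi> \<in> natural_paths 1 \<epsilon>" and t: "t \<in> {0..\<epsilon>}"
  then have "continuous_map (top_of_set {0..\<epsilon>}) (cube_top 1) \<phi>"
    by (simp add: natural_paths_def cmaps_def)
  then have "\<phi> t \<in> cube 1" using t continuous_map_image_subset_topspace
    by (fastforce simp: cube_top_def)
  moreover have "\<phi> t 0 = t" using p t by (simp add: natural_paths_def)
  ultimately show ?thesis by simp
qed

lemma some_in_class:
  assumes "0 < \<epsilon>" "q0 \<in> branch_paths K \<alpha> \<epsilon> // germ_rel K \<alpha> \<epsilon>"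
  shows "(SOME \<gamma>. \<gamma> \<in> q0) \<in> q0" "(SOME \<gamma>. \<gamma> \<in> q0) \<in> branch_paths K \<alpha> \<epsilon>"
proof -
  show *: "(SOME \<gamma>. \<gamma> \<in> q0) \<in> q0"
    using in_quotient_imp_non_empty[OF equiv_germ_rel[OF assms(1)] assms(2)] by (simp add: some_in_eq)
  show "(SOME \<gamma>. \<gamma> \<in> q0) \<in> branch_paths K \<alpha> \<epsilon>"
    using in_quotient_imp_subset[OF equiv_germ_rel[OF assms(1)] assms(2)] * by blast
qed

lemma diag_not:
  assumes eps: "0 < \<epsilon>" "\<epsilon> < 1"
  shows "germ_rel K2 z2 \<epsilon> `` {fam \<epsilon> 0} \<notin> germ_map B2 K2 id z2 \<epsilon> ` (branch_paths B2 z2 \<epsilon> // germ_rel B2 z2 \<epsilon>)"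
proof
  assume "germ_rel K2 z2 \<epsilon> `` {fam \<epsilon> 0} \<in> germ_map B2 K2 id z2 \<epsilon> ` (branch_paths B2 z2 \<epsilon> // germ_rel B2 z2 \<epsilon>)"
  then obtain q0 where q0: "q0 \<in> branch_paths B2 z2 \<epsilon> // germ_rel B2 z2 \<epsilon>"
    and eq: "germ_rel K2 z2 \<epsilon> `` {fam \<epsilon> 0} = germ_map B2 K2 id z2 \<epsilon> q0" by blast
  define \<gamma> where "\<gamma> = (SOME \<gamma>. \<gamma> \<in> q0)"
  have g: "\<gamma> \<in> branch_paths B2 z2 \<epsilon>" using some_in_class[OF eps(1) q0] \<gamma>_def by simp
  obtain c \<phi> where c: "c = [None, Some False] \<or> c = [Some False, None]" "\<phi> \<in> natural_paths 1 \<epsilon>"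
    "\<gamma> = restrict (cell_map B2 1 c \<circ> \<phi>) {0..\<epsilon>}"
    using bp_B2_form[OF g] by metis
  define \<delta> where "\<delta> = restrict (real_map B2 K2 id \<circ> \<gamma>) {0..\<epsilon>}"
  have "fam \<epsilon> 0 \<in> germ_rel K2 z2 \<epsilon> `` {fam \<epsilon> 0}"
    using equiv_class_self[OF equiv_germ_rel[OF eps(1)] fam_bp[of 0 \<epsilon>]] eps by simp
  then have "(\<delta>, fam \<epsilon> 0) \<in> germ_rel K2 z2 \<epsilon>"
    using eq unfolding germ_map_def \<delta>_def \<gamma>_def by simp
  then obtain e where e: "0 < e" "e < \<epsilon>" "\<delta> e = fam \<epsilon> 0 e"
    unfolding germ_rel_def by auto
  have "\<delta> e = real_class K2 (1, c, \<phi> e)"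
    using e unfolding \<delta>_def c(3) by (simp add: cell_map_def real_map_B2)
  moreover have "fam \<epsilon> 0 e = real_class K2 (2, [None, None], Phi \<epsilon> 0 e)"
    using e by (simp add: fam_def)
  ultimately have "emb2 (1, c, \<phi> e) = emb2 (2, [None, None], Phi \<epsilon> 0 e)"
    using e(3) real_class_emb2 by metis
  moreover have "\<phi> e 0 = e" using natural1[OF c(2)] e by simp
  ultimately show False using c(1) e(1)
    by (auto simp: emb2_def crd_def Phi_def)
qed

lemma edge_in:
  assumes eps: "0 < \<epsilon>" "\<epsilon> < 1" and s: "0 < s" "s \<le> 1"
  shows "germ_rel K2 z2 \<epsilon> `` {fam \<epsilon> s} \<in> germ_map B2 K2 id z2 \<epsilon> ` (branch_paths B2 z2 \<epsilon> // germ_rel B2 z2 \<epsilon>)"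
proof -
  define q0 where "q0 = germ_rel B2 z2 \<epsilon> `` {gedge \<epsilon>}"
  have q0: "q0 \<in> branch_paths B2 z2 \<epsilon> // germ_rel B2 z2 \<epsilon>"
    unfolding q0_def using gedge_bp[OF eps] by (rule quotientI)
  define \<gamma> where "\<gamma> = (SOME \<gamma>. \<gamma> \<in> q0)"
  have g: "\<gamma> \<in> q0" "\<gamma> \<in> branch_paths B2 z2 \<epsilon>" using some_in_class[OF eps(1) q0] \<gamma>_def by simp_all
  then obtain e1 where e1: "0 < e1" "e1 < \<epsilon>" "\<forall>t\<in>{0..e1}. gedge \<epsilon> t = \<gamma> t"
    unfolding q0_def germ_rel_def by auto
  define \<delta> where "\<delta> = restrict (real_map B2 K2 id \<circ> \<gamma>) {0..\<epsilon>}"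
  have d: "\<delta> \<in> branch_paths K2 z2 \<epsilon>" unfolding \<delta>_def by (rule real_map_path[OF g(2)])
  define e where "e = min e1 (s * \<epsilon> / 2)"
  have e: "0 < e" "e < \<epsilon>" "e \<le> e1" "e \<le> s * \<epsilon> / 2" using e1 eps s by (auto simp: e_def)
  have "\<forall>t\<in>{0..e}. \<delta> t = fam \<epsilon> s t"
  proof
    fix t assume t: "t \<in> {0..e}"
    then have t': "0 \<le> t" "t \<le> \<epsilon>" "t \<le> 1" "t \<le> e1" "t \<le> e" using e eps by auto
    have "\<delta> t = real_map B2 K2 id (gedge \<epsilon> t)" using t' e1(3) by (simp add: \<delta>_def)
    also have "\<dots> = real_class K2 (1, [None, Some False], edge t)"
      using t' by (simp add: gedge_def real_map_B2)
    also have "\<dots> = real_class K2 (2, [None, None], edge t)" using edge_class t' by simp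
    also have "\<dots> = fam \<epsilon> s t" using t' e Phi_edge[of t s \<epsilon>] by (simp add: fam_def)
    finally show "\<delta> t = fam \<epsilon> s t" .
  qed
  then have "(\<delta>, fam \<epsilon> s) \<in> germ_rel K2 z2 \<epsilon>"
    unfolding germ_rel_def using d fam_bp[of s \<epsilon>] eps s e by auto
  then have "germ_rel K2 z2 \<epsilon> `` {\<delta>} = germ_rel K2 z2 \<epsilon> `` {fam \<epsilon> s}"
    by (rule equiv_class_eq[OF equiv_germ_rel[OF eps(1)]])
  then have "germ_map B2 K2 id z2 \<epsilon> q0 = germ_rel K2 z2 \<epsilon> `` {fam \<epsilon> s}"
    unfolding germ_map_def \<delta>_def \<gamma>_def by simp
  then show ?thesis using q0 by (metis image_eqI)
qed



definition hpt :: "real \<Rightarrow> nat \<Rightarrow> real" where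
  "hpt s = (\<lambda>k. if k = 0 then 1 - s else if k = 1 then s else 0)"

lemma continuous_hpt: "continuous_map (top_of_set {0..1}) (simplex_top 1) hpt"
  unfolding simplex_top_def
proof (rule continuous_map_into_subtopology)
  show "continuous_map (top_of_set {0..1}) (powertop_real UNIV) hpt"
    unfolding continuous_map_componentwise_UNIV
  proof
    fix k :: nat
    show "continuous_map (top_of_set {0..1}) euclideanreal (\<lambda>x. hpt x k)"
      unfolding hpt_def continuous_map_iff_continuous
      by (cases "k = 0"; cases "k = 1") (auto intro!: continuous_intros)
  qed
  show "hpt \<in> topspace (top_of_set {0..1}) \<rightarrow> standard_simplex 1"
    by (auto simp: hpt_def standard_simplex_def)
qed

theorem proposition4p4:
  fixes \<epsilon> :: real
  assumes "0 < \<epsilon>" and "\<epsilon> < 1"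
  shows "\<not> closed_inclusion (germ_space (bdry_cube 2) (zero_vertex 2) \<epsilon>)
                            (germ_space (std_cube 2) (zero_vertex 2) \<epsilon>)
                            (germ_map (bdry_cube 2) (std_cube 2) id (zero_vertex 2) \<epsilon>)"
proof
  assume CI: "closed_inclusion (germ_space B2 z2 \<epsilon>) (germ_space K2 z2 \<epsilon>) (germ_map B2 K2 id z2 \<epsilon>)"
  define Im where "Im = germ_map B2 K2 id z2 \<epsilon> ` (branch_paths B2 z2 \<epsilon> // germ_rel B2 z2 \<epsilon>)"
  define S where "S = branch_paths K2 z2 \<epsilon> // germ_rel K2 z2 \<epsilon>"
  define P where "P = branch_space K2 z2 \<epsilon>"
  define q where "q = (\<lambda>\<gamma>. germ_rel K2 z2 \<epsilon> `` {\<gamma>})"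
  have tsY: "topspace (germ_space K2 z2 \<epsilon>) = S" unfolding S_def by (rule topspace_germ_space[OF assms(1)])
  have "closedin (germ_space K2 z2 \<epsilon>) Im"
    using CI unfolding closed_inclusion_def Im_def topspace_germ_space[OF assms(1)] by simp
  then have "openin (germ_space K2 z2 \<epsilon>) (S - Im)" using tsY by (simp add: closedin_def)
  then have W: "openin P {\<gamma> \<in> topspace P. q \<gamma> \<in> S - Im}"
    unfolding germ_space_def quotient_top_def openin_final_topology P_def q_def S_def by simp
  have "openin (simplex_top 1) {x \<in> topspace (simplex_top 1). fam \<epsilon> (x 1) \<in> {\<gamma> \<in> topspace P. q \<gamma> \<in> S - Im}}"
    using openin_delta_kelley_pre[OF W[unfolded P_def branch_space_def] continuous_fam[OF assms]]
    unfolding P_def branch_space_def .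
  then have B: "openin (top_of_set {0..1}) {s \<in> topspace (top_of_set {0..1}). hpt s \<in>
      {x \<in> topspace (simplex_top 1). fam \<epsilon> (x 1) \<in> {\<gamma> \<in> topspace P. q \<gamma> \<in> S - Im}}}"
    using continuous_hpt unfolding continuous_map by blast
  have tsP: "topspace P = cmaps (top_of_set {0..\<epsilon>}) (geom_real K2) \<inter> branch_paths K2 z2 \<epsilon>"
    unfolding P_def branch_space_def TOP_def by (simp add: topspace_delta_kelley topspace_compact_open)
  have hts: "\<And>s. s \<in> {0..1} \<Longrightarrow> hpt s \<in> topspace (simplex_top 1)"
    using continuous_map_image_subset_topspace[OF continuous_hpt] by auto
  have h1: "\<And>s. hpt s 1 = s" by (simp add: hpt_def)
  have "0 \<in> {s \<in> topspace (top_of_set {0..1}). hpt s \<in>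
      {x \<in> topspace (simplex_top 1). fam \<epsilon> (x 1) \<in> {\<gamma> \<in> topspace P. q \<gamma> \<in> S - Im}}}"
    using hts[of 0] h1 tsP fam_cmaps[of 0 \<epsilon>] fam_bp[of 0 \<epsilon>] assms diag_not[OF assms]
    by (auto simp: q_def S_def Im_def intro!: quotientI)
  with B obtain e where e: "e > 0" and eB: "\<forall>x'\<in>{0..1}. dist x' 0 < e \<longrightarrow> x' \<in>
      {s \<in> topspace (top_of_set {0..1}). hpt s \<in>
      {x \<in> topspace (simplex_top 1). fam \<epsilon> (x 1) \<in> {\<gamma> \<in> topspace P. q \<gamma> \<in> S - Im}}}"
    unfolding openin_euclidean_subtopology_iff by blast
  define s where "s = min (e / 2) 1"
  have s: "0 < s" "s \<le> 1" "dist s 0 < e" using e by (auto simp: s_def dist_real_def)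
  then have "q (fam \<epsilon> s) \<notin> Im" using eB h1 by auto
  moreover have "q (fam \<epsilon> s) \<in> Im" unfolding q_def Im_def by (rule edge_in[OF assms s(1,2)])
  ultimately show False by simp
qed

end
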